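(* Let $D$ be a strongly connected digraph with $\chi(D)\geq 4$. Then $D$ contains a subdivision of $B(2,1;1)$.
   Context: Digraphs are finite, without loops or parallel arcs (opposite arcs allowed). $\chi(D)$ is the chromatic number of the underlying undirected graph of $D$. A digraph is strongly connected if every vertex can reach every other vertex by a directed path. For positive integers $k_1,k_2,k_3$, a digraph $D$ contains a subdivision of $B(k_1,k_2;k_3)$ if there exist distinct vertices $x,y$ of $D$ and three pairwise internally vertex-disjoint directed paths in $D$: two from $x$ to $y$, of lengths (numbers of arcs) at least $k_1$ and at least $k_2$ respectively, and one from $y$ to $x$ of length at least $k_3$. *)

theory Defs
  imports Main
begin

text \<open>A digraph is given by a vertex set V and an arc relation A: finite, loopless,
  arcs between vertices of V. Parallel arcs cannot occur (A is a set); opposite arcs allowed.\<close>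

definition digraph :: "'a set \<Rightarrow> ('a \<times> 'a) set \<Rightarrow> bool" where
  "digraph V A \<longleftrightarrow> finite V \<and> A \<subseteq> V \<times> V \<and> (\<forall>v. (v, v) \<notin> A)"

definition strongly_connected :: "'a set \<Rightarrow> ('a \<times> 'a) set \<Rightarrow> bool" where
  "strongly_connected V A \<longleftrightarrow> (\<forall>u\<in>V. \<forall>v\<in>V. (u, v) \<in> A\<^sup>*)"

definition proper_colouring :: "'a set \<Rightarrow> ('a \<times> 'a) set \<Rightarrow> nat \<Rightarrow> ('a \<Rightarrow> nat) \<Rightarrow> bool" where
  "proper_colouring V A k c \<longleftrightarrow> (\<forall>v\<in>V. c v < k) \<and> (\<forall>(u, v)\<in>A. c u \<noteq> c v)"

definition chromatic_number :: "'a set \<Rightarrow> ('a \<times> 'a) set \<Rightarrow> nat" where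
  "chromatic_number V A = (LEAST k. \<exists>c. proper_colouring V A k c)"

definition dpath :: "('a \<times> 'a) set \<Rightarrow> 'a list \<Rightarrow> 'a \<Rightarrow> 'a \<Rightarrow> bool" where
  "dpath A p x y \<longleftrightarrow> length p \<ge> 1 \<and> distinct p \<and> hd p = x \<and> last p = y \<and>
     (\<forall>i. Suc i < length p \<longrightarrow> (p ! i, p ! Suc i) \<in> A)"

definition path_len :: "'a list \<Rightarrow> nat" where
  "path_len p = length p - 1"

definition inner :: "'a list \<Rightarrow> 'a set" where
  "inner p = set (butlast (tl p))"

definition contains_B_subdivision :: "'a set \<Rightarrow> ('a \<times> 'a) set \<Rightarrow> nat \<Rightarrow> nat \<Rightarrow> nat \<Rightarrow> bool" where
  "contains_B_subdivision V A k1 k2 k3 \<longleftrightarrow>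
    (\<exists>x\<in>V. \<exists>y\<in>V. \<exists>P1 P2 P3. x \<noteq> y \<and>
       dpath A P1 x y \<and> dpath A P2 x y \<and> dpath A P3 y x \<and>
       path_len P1 \<ge> k1 \<and> path_len P2 \<ge> k2 \<and> path_len P3 \<ge> k3 \<and>
       set P1 \<inter> set P2 = {x, y} \<and> set P1 \<inter> set P3 = {x, y} \<and> set P2 \<inter> set P3 = {x, y})"

end

theory Submission
  imports Defs
begin


lemma dpath_nth: "dpath A p x y \<longleftrightarrow> p \<noteq> [] \<and> distinct p \<and> p!0 = x \<and> p!(length p - 1) = y \<and>
   (\<forall>i. Suc i < length p \<longrightarrow> (p ! i, p ! Suc i) \<in> A)"
  unfolding dpath_def
  by (metis One_nat_def Suc_le_eq hd_conv_nth last_conv_nth length_greater_0_conv)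

lemma dpath_Cons:
  assumes "dpath A p y z" "(x,y) \<in> A" "x \<notin> set p"
  shows "dpath A (x#p) x z"
proof -
  have "p \<noteq> []" "hd p = y" using assms(1) unfolding dpath_def by auto
  moreover have "\<forall>i. Suc i < length (x#p) \<longrightarrow> ((x#p) ! i, (x#p) ! Suc i) \<in> A"
  proof (intro allI impI)
    fix i assume "Suc i < length (x#p)"
    then show "((x#p) ! i, (x#p) ! Suc i) \<in> A"
      using assms calculation unfolding dpath_def
      by (cases i) (auto simp: hd_conv_nth)
  qed
  ultimately show ?thesis using assms unfolding dpath_def by auto
qed

lemma dpath_snoc:
  assumes "dpath A p x y" "(y,z) \<in> A" "z \<notin> set p"
  shows "dpath A (p@[z]) x z"
proof -
  have ne: "p \<noteq> []" "last p = y" using assms(1) unfolding dpath_def by auto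
  have "\<forall>i. Suc i < length (p@[z]) \<longrightarrow> ((p@[z]) ! i, (p@[z]) ! Suc i) \<in> A"
  proof (intro allI impI)
    fix i assume i: "Suc i < length (p@[z])"
    show "((p@[z]) ! i, (p@[z]) ! Suc i) \<in> A"
    proof (cases "Suc i < length p")
      case True then show ?thesis using assms(1) unfolding dpath_def by (auto simp: nth_append)
    next
      case False
      then have "i = length p - 1" "Suc i = length p" using i by auto
      then show ?thesis using ne assms(2) by (simp add: nth_append last_conv_nth)
    qed
  qed
  then show ?thesis using assms ne unfolding dpath_def by auto
qed

lemma dpath_suffix:
  assumes "dpath A (p1 @ v # p2) x y"
  shows "dpath A (v # p2) v y"
proof -
  have "\<forall>i. Suc i < length (v#p2) \<longrightarrow> ((v#p2) ! i, (v#p2) ! Suc i) \<in> A"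
  proof (intro allI impI)
    fix i assume i: "Suc i < length (v#p2)"
    then have "Suc (length p1 + i) < length (p1 @ v # p2)" by simp
    then have "((p1 @ v # p2) ! (length p1 + i), (p1 @ v # p2) ! Suc (length p1 + i)) \<in> A"
      using assms unfolding dpath_def by blast
    then show "((v#p2) ! i, (v#p2) ! Suc i) \<in> A"
      by (simp add: nth_append del: nth_Cons_Suc)
  qed
  then show ?thesis using assms unfolding dpath_def by auto
qed

lemma dpath_take:
  assumes "dpath A p x y" "k < length p"
  shows "dpath A (take (Suc k) p) x (p!k)"
proof -
  have "length p \<le> Suc k \<Longrightarrow> k = length p - 1" using assms(2) by arith
  then show ?thesis using assms unfolding dpath_nth by (auto simp: min_def)
qed

lemma rtrancl_dpath:
  assumes "(x,y) \<in> R\<^sup>*"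
  shows "\<exists>p. dpath R p x y"
  using assms
proof (induction rule: converse_rtrancl_induct)
  case base
  then show ?case by (rule exI[of _ "[y]"]) (simp add: dpath_def)
next
  case (step x z)
  then obtain p where p: "dpath R p z y" by blast
  show ?case
  proof (cases "x \<in> set p")
    case True
    then obtain p1 p2 where "p = p1 @ x # p2" by (meson split_list)
    then show ?thesis using p dpath_suffix by metis
  next
    case False
    then show ?thesis using dpath_Cons[OF p step(1)] by blast
  qed
qed

lemma reach_set:
  assumes "(u,w) \<in> R\<^sup>*" "w \<in> X" "u \<notin> X"
  shows "\<exists>p w'. dpath R p u w' \<and> w' \<in> X \<and> set (butlast p) \<inter> X = {}"
proof -
  obtain p where p: "dpath R p u w" using rtrancl_dpath[OF assms(1)] by blast
  have ex: "\<exists>k. k < length p \<and> p!k \<in> X"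
    using p assms(2) unfolding dpath_nth by (intro exI[of _ "length p - 1"]) auto
  define k where "k = (LEAST k. k < length p \<and> p!k \<in> X)"
  have k: "k < length p" "p!k \<in> X" using LeastI_ex[OF ex] unfolding k_def by auto
  have kmin: "\<And>j. j < k \<Longrightarrow> p!j \<notin> X"
    using not_less_Least k(1) unfolding k_def by (metis less_trans)
  have "dpath R (take (Suc k) p) u (p!k)" using dpath_take[OF p k(1)] .
  moreover have "set (butlast (take (Suc k) p)) \<inter> X = {}"
  proof -
    have "butlast (take (Suc k) p) = take k p" using k(1)
      by (simp add: butlast_take)
    moreover have "set (take k p) \<inter> X = {}"
      using kmin k(1) by (auto simp: in_set_conv_nth)
    ultimately show ?thesis by simp
  qed
  ultimately show ?thesis using k(2) by blast
qed

lemma path_reach: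
  assumes "\<forall>i. Suc i < length q \<longrightarrow> (q!i, q!Suc i) \<in> R" "i \<le> j" "j < length q"
  shows "(q!i, q!j) \<in> R\<^sup>*"
  using assms(2,3)
proof (induction j)
  case 0 then show ?case by simp
next
  case (Suc j)
  show ?case
  proof (cases "i = Suc j")
    case True then show ?thesis by simp
  next
    case False
    then have "(q!i, q!j) \<in> R\<^sup>*" using Suc by auto
    moreover have "(q!j, q!Suc j) \<in> R" using assms(1) Suc by auto
    ultimately show ?thesis by simp
  qed
qed



definition cyc :: "('a \<times> 'a) set \<Rightarrow> 'a list \<Rightarrow> bool" where
  "cyc A Q \<longleftrightarrow> length Q \<ge> 2 \<and> distinct Q \<and> (\<forall>i<length Q. (Q!i, Q!(Suc i mod length Q)) \<in> A)"

lemma split3: "length p \<ge> 2 \<Longrightarrow> p = hd p # butlast (tl p) @ [last p]"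
  by (cases p) (auto)

lemma set_split3: "length p \<ge> 2 \<Longrightarrow> set p = insert (hd p) (insert (last p) (inner p))"
  unfolding inner_def by (subst split3, assumption, auto)

lemma cyc_rotate:
  assumes "cyc A Q" shows "cyc A (rotate n Q)"
proof -
  let ?L = "length Q"
  have L: "?L \<ge> 2" using assms unfolding cyc_def by auto
  have "(rotate n Q ! i, rotate n Q ! (Suc i mod ?L)) \<in> A" if i: "i < ?L" for i
  proof -
    have "rotate n Q ! i = Q ! ((n+i) mod ?L)" using i by (simp add: nth_rotate)
    moreover have "rotate n Q ! (Suc i mod ?L) = Q ! ((n + Suc i mod ?L) mod ?L)"
      proof (rule nth_rotate)
        show "Suc i mod length Q < length Q" using L by (intro mod_less_divisor) linarith
      qed
    moreover have "(n + Suc i mod ?L) mod ?L = Suc ((n+i) mod ?L) mod ?L"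
      by (simp add: mod_Suc_eq mod_add_right_eq)
    moreover have "(n+i) mod ?L < ?L" using L by (intro mod_less_divisor) linarith
    ultimately show ?thesis using assms unfolding cyc_def by metis
  qed
  then show ?thesis using assms unfolding cyc_def by simp
qed

lemma cyc_seg1:
  assumes "cyc A Q" "m < length Q"
  shows "dpath A (take (Suc m) Q) (Q!0) (Q!m)"
proof -
  have "\<forall>i. Suc i < length (take (Suc m) Q) \<longrightarrow> (take (Suc m) Q ! i, take (Suc m) Q ! Suc i) \<in> A"
  proof (intro allI impI)
    fix i assume i: "Suc i < length (take (Suc m) Q)"
    then have "Suc i < length Q" by simp
    then have "i < length Q" by simp
    then have "(Q!i, Q!(Suc i mod length Q)) \<in> A" using assms(1) unfolding cyc_def by blast
    moreover have "Suc i mod length Q = Suc i" using \<open>Suc i < length Q\<close> by simp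
    ultimately have "(Q!i, Q!Suc i) \<in> A" by simp
    then show "(take (Suc m) Q ! i, take (Suc m) Q ! Suc i) \<in> A" using i \<open>Suc i < length Q\<close> by simp
  qed
  moreover have "length Q \<le> Suc m \<Longrightarrow> length Q - Suc 0 = m" using assms(2) by arith
  ultimately show ?thesis using assms unfolding dpath_nth cyc_def by (auto simp: min_def)
qed

lemma cyc_seg2:
  assumes "cyc A Q" "0 < m" "m < length Q"
  shows "dpath A (drop m Q @ [Q!0]) (Q!m) (Q!0)"
proof -
  let ?L = "length Q"
  let ?p = "drop m Q @ [Q!0]"
  have "\<forall>i. Suc i < length ?p \<longrightarrow> (?p ! i, ?p ! Suc i) \<in> A"
  proof (intro allI impI)
    fix i assume i: "Suc i < length ?p"
    then have "m + i < ?L" by simp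
    then have a: "(Q!(m+i), Q!(Suc (m+i) mod ?L)) \<in> A" using assms unfolding cyc_def by auto
    show "(?p ! i, ?p ! Suc i) \<in> A"
    proof (cases "Suc (m+i) < ?L")
      case True
      have "i < length Q - m" using \<open>m+i < ?L\<close> by simp
      then have "?p ! i = Q!(m+i)" by (simp add: nth_append)
      moreover have "Suc i < length Q - m" using True by simp
      then have "?p ! Suc i = Q!(Suc (m+i))" by (simp add: nth_append)
      ultimately show ?thesis using a True by simp
    next
      case False
      then have "Suc (m+i) = ?L" using \<open>m+i < ?L\<close> by simp
      then have "i < length Q - m" "Suc i = length Q - m" by auto
      then have "?p ! i = Q!(m+i)" "?p ! Suc i = Q!0" by (simp_all add: nth_append)
      then show ?thesis using a \<open>Suc (m+i) = ?L\<close> by simp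
    qed
  qed
  moreover have "distinct ?p"
  proof -
    have "distinct Q" using assms unfolding cyc_def by auto
    moreover have "Q!0 \<notin> set (drop m Q)"
    proof -
      have "take m Q ! 0 = Q!0" "0 < length (take m Q)" using assms by auto
      then have "Q!0 \<in> set (take m Q)" by (metis nth_mem)
      moreover have "distinct (take m Q @ drop m Q)" using \<open>distinct Q\<close> by simp
      ultimately show ?thesis by (meson disjoint_iff distinct_append)
    qed
    ultimately show ?thesis by simp
  qed
  ultimately show ?thesis using assms unfolding dpath_nth by (auto simp: nth_append)
qed



lemma cyc_in_V:
  assumes "cyc A Q" "A \<subseteq> V \<times> V" shows "set Q \<subseteq> V"
proof
  fix v assume "v \<in> set Q"
  then obtain i where "i < length Q" "v = Q!i" by (auto simp: in_set_conv_nth)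
  then show "v \<in> V" using assms unfolding cyc_def by blast
qed

lemma CE0:
  assumes AV: "A \<subseteq> V \<times> V" and C: "cyc A Q" and m: "0 < m" "m < length Q"
    and R: "dpath A R (Q!0) (Q!m)" and inn: "inner R \<inter> set Q = {}"
    and nt: "length R = 2 \<longrightarrow> m \<noteq> 1"
  shows "contains_B_subdivision V A 2 1 1"
proof -
  define a where "a = Q!0"
  define b where "b = Q!m"
  have dQ: "distinct Q" using C unfolding cyc_def by auto
  have ab: "a \<noteq> b" unfolding a_def b_def proof -
    have "Q \<noteq> []" using m by auto
    then show "Q!0 \<noteq> Q!m" using dQ m nth_eq_iff_index_eq[of Q 0 m] by auto
  qed
  have QV: "set Q \<subseteq> V" using cyc_in_V[OF C AV] .
  have aV: "a \<in> V" "b \<in> V" proof -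
    have "Q!0 \<in> set Q" "Q!m \<in> set Q" using m by (auto intro!: nth_mem)
    then show "a \<in> V" "b \<in> V" unfolding a_def b_def using QV by auto
  qed
  have Rhl: "hd R = a" "last R = b" "R \<noteq> []" using R unfolding dpath_def a_def b_def by auto
  have R2: "length R \<ge> 2"
  proof (rule ccontr)
    assume "\<not> length R \<ge> 2"
    then have "length R = 1" using Rhl(3) by (cases R) (auto simp: Suc_le_eq)
    then obtain z where "R = [z]" by (metis One_nat_def length_0_conv length_Suc_conv)
    then show False using Rhl ab by simp
  qed
  have setR: "set R = insert a (insert b (inner R))" using set_split3[OF R2] Rhl by simp
  define Pa where "Pa = take (Suc m) Q"
  define P3 where "P3 = drop m Q @ [a]"
  have dPa: "dpath A Pa a b" unfolding Pa_def a_def b_def using cyc_seg1[OF C m(2)] .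
  have dP3: "dpath A P3 b a" unfolding P3_def a_def b_def using cyc_seg2[OF C m] .
  have Qsplit: "Q = take m Q @ Q!m # drop (Suc m) Q" by (rule id_take_nth_drop) (use m in simp)
  have d: "distinct (take m Q @ Q!m # drop (Suc m) Q)" using dQ Qsplit by simp
  have a_take: "a \<in> set (take m Q)"
  proof -
    have "take m Q ! 0 = Q!0" "0 < length (take m Q)" using m by auto
    then show ?thesis unfolding a_def by (metis nth_mem)
  qed
  have sPa: "set Pa = insert b (set (take m Q))" unfolding Pa_def b_def using m
    by (simp add: take_Suc_conv_app_nth)
  have sP3: "set P3 = insert a (insert b (set (drop (Suc m) Q)))" unfolding P3_def b_def using m
    by (simp add: Cons_nth_drop_Suc[symmetric] insert_commute)
  have sQ: "set Q = set (take m Q) \<union> insert (Q!m) (set (drop (Suc m) Q))"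
    using Qsplit by (metis list.simps(15) set_append)
  have i1: "set Pa \<inter> set P3 = {a,b}"
    using d a_take unfolding sPa sP3 b_def by auto
  have i2: "set R \<inter> set Pa = {a,b}"
    using inn a_take unfolding setR sPa sQ b_def by auto
  have i3: "set R \<inter> set P3 = {a,b}"
    using inn unfolding setR sP3 sQ b_def by auto
  have lPa: "path_len Pa = m" unfolding path_len_def Pa_def using m by simp
  have lP3: "path_len P3 \<ge> 1" unfolding path_len_def P3_def using m by simp
  have lR: "path_len R \<ge> 1" unfolding path_len_def using R2 by simp
  show ?thesis
  proof (cases "m \<ge> 2")
    case True
    show ?thesis unfolding contains_B_subdivision_def
      apply (rule bexI[of _ a], rule bexI[of _ b])
        apply (rule exI[of _ Pa], rule exI[of _ R], rule exI[of _ P3])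
      using ab dPa R dP3 lPa True lR lP3 i1 i2 i3 aV unfolding a_def b_def
      by (auto simp: Int_commute)
  next
    case False
    then have "m = 1" using m by simp
    then have "length R \<noteq> 2" using nt by auto
    then have "path_len R \<ge> 2" using R2 unfolding path_len_def by simp
    show ?thesis unfolding contains_B_subdivision_def
      apply (rule bexI[of _ a], rule bexI[of _ b])
        apply (rule exI[of _ R], rule exI[of _ Pa], rule exI[of _ P3])
      using ab dPa R dP3 lPa \<open>path_len R \<ge> 2\<close> \<open>m = 1\<close> lP3 i1 i2 i3 aV unfolding a_def b_def
      by (auto simp: Int_commute)
  qed
qed

lemma CE:
  assumes AV: "A \<subseteq> V \<times> V" and C: "cyc A Q" and ij: "i < length Q" "j < length Q" "i \<noteq> j"
    and R: "dpath A R (Q!i) (Q!j)" and inn: "inner R \<inter> set Q = {}"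
    and nt: "length R = 2 \<longrightarrow> j \<noteq> Suc i mod length Q"
  shows "contains_B_subdivision V A 2 1 1"
proof -
  let ?L = "length Q"
  define Q' where "Q' = rotate i Q"
  define m where "m = (if i \<le> j then j - i else j + ?L - i)"
  have m: "0 < m" "m < ?L" "(i + m) mod ?L = j" unfolding m_def using ij by auto
  have C': "cyc A Q'" unfolding Q'_def using cyc_rotate[OF C] .
  have lQ': "length Q' = ?L" unfolding Q'_def by simp
  have q0: "Q'!0 = Q!i" proof -
    have "Q \<noteq> []" using ij by auto
    then show ?thesis unfolding Q'_def using ij nth_rotate[of 0 Q i] by simp
  qed
  have qm: "Q'!m = Q!j" unfolding Q'_def using m nth_rotate[of m Q i] by simp
  have sQ': "set Q' = set Q" unfolding Q'_def by simp
  have "m = 1 \<Longrightarrow> j = Suc i mod ?L" using m(3) by simp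
  then show ?thesis
    using CE0[OF AV C' m(1)] m(2) R inn nt q0 qm sQ' lQ' by auto
qed



definition strongT :: "('a \<times> 'a) set \<Rightarrow> 'a set \<Rightarrow> bool" where
  "strongT A T \<longleftrightarrow> (\<forall>x\<in>T. \<forall>y\<in>T. (x,y) \<in> (A \<inter> T \<times> T)\<^sup>*)"

lemma dpath_mono: "dpath R p x y \<Longrightarrow> R \<subseteq> R' \<Longrightarrow> dpath R' p x y"
  unfolding dpath_def by blast

lemma dpath_in:
  assumes "dpath R p x y" "R \<subseteq> T \<times> T" "x \<in> T" shows "set p \<subseteq> T"
proof
  fix v assume "v \<in> set p"
  then obtain i where i: "i < length p" "v = p!i" by (auto simp: in_set_conv_nth)
  show "v \<in> T"
  proof (cases i)
    case 0 then show ?thesis using assms i unfolding dpath_nth by auto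
  next
    case (Suc k)
    then have "(p!k, p!Suc k) \<in> R" using assms(1) i unfolding dpath_def by auto
    then show ?thesis using assms(2) i Suc by auto
  qed
qed

lemma dpath_append:
  assumes p: "dpath A p x y" and q: "dpath A q y z" and pq: "set p \<inter> set q = {y}"
  shows "dpath A (p @ tl q) x z"
proof -
  have pne: "p \<noteq> []" "hd p = x" "last p = y" "distinct p" using p unfolding dpath_def by auto
  have qne: "q \<noteq> []" "hd q = y" "last q = z" "distinct q" using q unfolding dpath_def by auto
  have qs: "q = y # tl q" using qne by (cases q) auto
  have ytl: "y \<notin> set (tl q)" using qne(4) qs by (metis distinct.simps(2))
  have dis: "distinct (p @ tl q)" using pne(4) qne(4) pq ytl qs
    by (auto simp: distinct_tl) (metis IntI empty_iff insert_iff list.set_intros(2))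
  have lst: "last (p @ tl q) = z"
    using pne qne qs by (cases "tl q = []") (auto simp: last_tl)
  have arcs: "\<forall>i. Suc i < length (p @ tl q) \<longrightarrow> ((p @ tl q) ! i, (p @ tl q) ! Suc i) \<in> A"
  proof (intro allI impI)
    fix i assume i: "Suc i < length (p @ tl q)"
    consider (a) "Suc i < length p" | (b) "Suc i = length p" | (c) "length p \<le> i" by linarith
    then show "((p @ tl q) ! i, (p @ tl q) ! Suc i) \<in> A"
    proof cases
      case a then show ?thesis using p by (simp add: nth_append dpath_def)
    next
      case b
      then have "i = length p - Suc 0" by simp
      then have e1: "(p @ tl q) ! i = y" using pne b by (simp add: nth_append last_conv_nth)
      have "(p @ tl q) ! Suc i = tl q ! 0" using b by (simp add: nth_append)
      also have "\<dots> = q ! 1" using qs by (metis nth_Cons_Suc One_nat_def)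
      finally have e2: "(p @ tl q) ! Suc i = q ! 1" .
      have "1 < length q" using i b by simp
      then have "(q!0, q!1) \<in> A" using q unfolding dpath_def by auto
      then show ?thesis using e1 e2 qne qs by (metis nth_Cons_0)
    next
      case c
      define k where "k = i - length p"
      have e1: "(p @ tl q) ! i = q ! Suc k" unfolding k_def using c qs
        by (simp add: nth_append) (metis nth_Cons_Suc)
      have e2: "(p @ tl q) ! Suc i = q ! Suc (Suc k)" unfolding k_def using c qs
        by (simp add: nth_append Suc_diff_le) (metis nth_Cons_Suc)
      have "Suc (Suc k) < length q" using i c unfolding k_def by auto
      then show ?thesis using q e1 e2 unfolding dpath_def by auto
    qed
  qed
  have "length (p @ tl q) \<ge> 1" using pne(1) by (cases p) auto
  then show ?thesis unfolding dpath_def using pne dis lst arcs by auto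
qed

lemma cyc_of_dpath:
  assumes "dpath A Q x y" "(y,x) \<in> A" "length Q \<ge> 2"
  shows "cyc A Q"
proof -
  have "(Q!i, Q!(Suc i mod length Q)) \<in> A" if i: "i < length Q" for i
  proof (cases "Suc i < length Q")
    case True then show ?thesis using assms(1) unfolding dpath_def by simp
  next
    case False
    then have "Suc i = length Q" using i by simp
    then have "i = length Q - Suc 0" by simp
    then have "Q!i = y" "Q!(Suc i mod length Q) = x" using assms(1) \<open>Suc i = length Q\<close> unfolding dpath_nth by auto
    then show ?thesis using assms(2) by simp
  qed
  then show ?thesis using assms unfolding cyc_def dpath_def by auto
qed

lemma tl_sub: "set (tl xs) \<subseteq> set xs" by (cases xs) auto

lemma inner_sub: "inner p \<subseteq> set (tl p)" "inner p \<subseteq> set (butlast p)"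
  unfolding inner_def
  using in_set_butlastD apply fastforce
  using tl_sub[of "butlast p"] by (simp add: butlast_tl)

lemma GL:
  assumes AV: "A \<subseteq> V \<times> V" and sT: "strongT A T" and uw: "u \<in> T" "w \<in> T" "u \<noteq> w"
    and P: "dpath A P u w" and lP: "length P \<ge> 3" and iP: "inner P \<inter> T = {}"
  shows "contains_B_subdivision V A 2 1 1"
proof -
  let ?R = "A \<inter> T \<times> T"
  obtain S' where S': "dpath ?R S' w u" using rtrancl_dpath sT uw unfolding strongT_def by metis
  have S'T: "set S' \<subseteq> T" using dpath_in[OF S' _ uw(2)] by blast
  have S'p: "S' \<noteq> []" "hd S' = w" "last S' = u" "distinct S'" using S' unfolding dpath_def by auto
  define B where "B = butlast S'"
  have S'B: "S' = B @ [u]" unfolding B_def using S'p append_butlast_last_id by metis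
  have Bne: "B \<noteq> []" using S'B S'p uw(3) by (cases B) auto
  have hB: "hd B = w" using S'B S'p Bne by (cases B) auto
  have uB: "u \<notin> set B" using S'p(4) S'B by simp
  have BT: "set B \<subseteq> T" using S'T S'B by auto
  define v where "v = last B"
  have dB: "dpath A B w v"
  proof -
    have "length B - 1 < length S'" using S'B by simp
    from dpath_take[OF S' this] have "dpath ?R (take (Suc (length B - 1)) S') w (S' ! (length B - 1))" .
    moreover have "take (Suc (length B - 1)) S' = B" using S'B Bne by (cases B) auto
    moreover have "S' ! (length B - 1) = v" unfolding v_def using S'B Bne
      by (simp add: nth_append last_conv_nth)
    ultimately show ?thesis using dpath_mono by fastforce
  qed
  have vu: "(v,u) \<in> A"
  proof -
    have "Suc (length B - 1) < length S'" using S'B Bne by simp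
    then have "(S'!(length B - 1), S'!Suc (length B - 1)) \<in> ?R" using S' unfolding dpath_def by blast
    moreover have "S' ! (length B - 1) = v" unfolding v_def using S'B Bne
      by (simp add: nth_append last_conv_nth)
    moreover have "S' ! Suc (length B - 1) = u" using S'B Bne by (simp add: nth_append)
    ultimately show ?thesis by simp
  qed
  have P2: "length P \<ge> 2" using lP by simp
  have Pp: "hd P = u" "last P = w" using P unfolding dpath_def by auto
  have setP: "set P = insert u (insert w (inner P))" using set_split3[OF P2] Pp by simp
  have PB: "set P \<inter> set B = {w}"
  proof -
    have "w \<in> set B" using hB Bne by (metis list.set_sel(1))
    then show ?thesis using setP uB iP BT by auto
  qed
  define Q where "Q = P @ tl B"
  have dQ: "dpath A Q u v" unfolding Q_def by (rule dpath_append[OF P dB PB])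
  have lQ: "length Q \<ge> 3" unfolding Q_def using lP by simp
  have cQ: "cyc A Q" using cyc_of_dpath[OF dQ vu] lQ by simp
  have Q0: "Q!0 = u" using dQ unfolding dpath_nth by simp
  have Q1: "Q!1 = P!1" unfolding Q_def using lP by (simp add: nth_append)
  have P1: "P!1 \<in> inner P"
  proof -
    have "butlast (tl P) ! 0 = P!1" using lP by (cases P) (auto simp: nth_butlast)
    moreover have "0 < length (butlast (tl P))" using lP by simp
    ultimately show ?thesis unfolding inner_def by (metis nth_mem)
  qed
  have setQ: "set Q = set P \<union> set B" unfolding Q_def using Bne hB setP
    by (cases B) auto
  define X where "X = set S' - {u}"
  have "(u,w) \<in> ?R\<^sup>*" using sT uw unfolding strongT_def by blast
  moreover have "w \<in> X" unfolding X_def using S'p uw by (metis DiffI hd_in_set singletonD)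
  moreover have "u \<notin> X" unfolding X_def by simp
  ultimately obtain p w' where p: "dpath ?R p u w'" "w' \<in> X" "set (butlast p) \<inter> X = {}"
    using reach_set by metis
  have pT: "set p \<subseteq> T" using dpath_in[OF p(1) _ uw(1)] by blast
  have dpA: "dpath A p u w'" using dpath_mono[OF p(1)] by blast
  have w'B: "w' \<in> set B" using p(2) unfolding X_def S'B by auto
  have w'Q: "w' \<in> set Q" using w'B setQ by auto
  then obtain j where j: "j < length Q" "Q!j = w'" by (meson in_set_conv_nth)
  have w'u: "w' \<noteq> u" using p(2) unfolding X_def by simp
  have j0: "j \<noteq> 0"
  proof
    assume "j = 0" then show False using j(2) Q0 w'u by simp
  qed
  have pp: "hd p = u" "distinct p" "p \<noteq> []" using p(1) unfolding dpath_def by auto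
  have u_tl: "u \<notin> set (tl p)" using pp by (cases p) auto
  have i1: "inner p \<subseteq> T" using inner_sub(1)[of p] tl_sub[of p] pT by blast
  have i2: "inner p \<inter> X = {}" using inner_sub(2)[of p] p(3) by blast
  have i3: "u \<notin> inner p" using inner_sub(1)[of p] u_tl by blast
  have wX: "w \<in> X" using \<open>w \<in> X\<close> .
  have BX: "set B \<subseteq> X \<union> {u}" unfolding X_def S'B by auto
  have sQ: "set Q \<subseteq> inner P \<union> X \<union> {u}" using setQ setP wX BX by blast
  have inn: "inner p \<inter> set Q = {}" using i1 i2 i3 sQ iP by blast
  have w'T: "w' \<in> T" using pT pp p(1) unfolding dpath_def by (metis last_in_set subsetD)
  have Q1m: "Suc 0 mod length Q = 1" using lQ by simp
  have nt: "length p = 2 \<longrightarrow> j \<noteq> Suc 0 mod length Q"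
  proof
    assume l2: "length p = 2"
    show "j \<noteq> Suc 0 mod length Q"
    proof
      assume "j = Suc 0 mod length Q"
      then have "j = 1" using Q1m by simp
      then have "w' \<in> inner P" using j(2) Q1 P1 by simp
      then show False using w'T iP by blast
    qed
  qed
  have l0: "0 < length Q" using lQ by linarith
  have dp0: "dpath A p (Q!0) (Q!j)" using dpA Q0 j(2) by simp
  show ?thesis by (rule CE[OF AV cQ l0 j(1) j0[symmetric] dp0 inn nt])
qed



definition colT :: "('a \<times> 'a) set \<Rightarrow> 'a set \<Rightarrow> ('a \<Rightarrow> nat) \<Rightarrow> bool" where
  "colT A T c \<longleftrightarrow> (\<forall>v\<in>T. c v < 3) \<and> (\<forall>a b. (a,b) \<in> A \<longrightarrow> a \<in> T \<longrightarrow> b \<in> T \<longrightarrow> c a \<noteq> c b)"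

lemma exit_arc:
  assumes "(s,z) \<in> A\<^sup>*" "s \<in> S" "z \<notin> S"
  shows "\<exists>u t. u \<in> S \<and> t \<notin> S \<and> (u,t) \<in> A"
  using assms
proof (induction rule: rtrancl_induct)
  case base then show ?case by simp
next
  case (step y z)
  then show ?case by (cases "y \<in> S") auto
qed

lemma least_idx:
  assumes "distinct Q" "k < length Q"
  shows "(LEAST i. Q!i = Q!k) = k"
proof (rule Least_equality)
  show "Q!k = Q!k" by simp
next
  fix y assume "Q!y = Q!k"
  show "k \<le> y"
  proof (rule ccontr)
    assume "\<not> k \<le> y"
    then have "y < k" by simp
    then show False using assms \<open>Q!y = Q!k\<close> nth_eq_iff_index_eq[of Q y k] by simp
  qed
qed

lemma m2: "(i::nat) mod 2 = 0 \<and> Suc i mod 2 = 1 \<or> i mod 2 = 1 \<and> Suc i mod 2 = 0"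
  by (cases "even i") (auto simp: odd_iff_mod_2_eq_one even_iff_mod_2_eq_zero mod_Suc)

lemma x3: "(x::nat) < 3 \<Longrightarrow> x = 0 \<or> x = 1 \<or> x = 2" by auto

lemma col_arith1: "(x::nat) < 3 \<Longrightarrow> (x + 1 + i mod 2) mod 3 \<noteq> x"
  using m2[of i] x3[of x] by (auto simp: mod_Suc)
lemma col_arith2: "(x::nat) < 3 \<Longrightarrow> (x + 1 + i mod 2) mod 3 \<noteq> (x + 1 + Suc i mod 2) mod 3"
  using m2[of i] x3[of x] by (auto simp: mod_Suc)

lemma extend:
  assumes dg: "digraph V A" and sc: "strongly_connected V A"
    and nB: "\<not> contains_B_subdivision V A 2 1 1"
    and S: "S \<subseteq> V" "S \<noteq> {}" "S \<noteq> V" "strongT A S" "colT A S c"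
  shows "\<exists>S2 c2. S \<subset> S2 \<and> S2 \<subseteq> V \<and> strongT A S2 \<and> colT A S2 c2"
proof -
  have AV: "A \<subseteq> V \<times> V" and loop: "\<And>v. (v,v) \<notin> A" using dg unfolding digraph_def by auto
  obtain z where z: "z \<in> V" "z \<notin> S" using S by blast
  obtain s where s: "s \<in> S" using S by blast
  have "(s,z) \<in> A\<^sup>*" using sc s z S(1) unfolding strongly_connected_def by blast
  then obtain u t where ut: "u \<in> S" "t \<notin> S" "(u,t) \<in> A" using exit_arc s z by metis
  have tV: "t \<in> V" using ut AV by blast
  have "(t,u) \<in> A\<^sup>*" using sc tV ut S(1) unfolding strongly_connected_def by blast
  then obtain q w where q: "dpath A q t w" "w \<in> S" "set (butlast q) \<inter> S = {}"
    using reach_set[of t u A S] ut by metis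
  define ps where "ps = butlast q"
  have qp: "q \<noteq> []" "hd q = t" "last q = w" "distinct q" using q(1) unfolding dpath_def by auto
  have qps: "q = ps @ [w]" unfolding ps_def using qp append_butlast_last_id by metis
  have psne: "ps \<noteq> []" using qps qp q(2) ut(2) by (cases ps) auto
  have hps: "hd ps = t" using qps qp psne by (cases ps) auto
  have psS: "set ps \<inter> S = {}" using q(3) unfolding ps_def .
  have uq: "u \<notin> set ps" using psS ut by blast
  show ?thesis
  proof (cases "w = u")
    case False
    define P where "P = u # q"
    have uq2: "u \<notin> set q" using qps uq False by auto
    have dP: "dpath A P u w" unfolding P_def using dpath_Cons[OF q(1) ut(3) uq2] .
    have lP: "length P \<ge> 3" unfolding P_def qps using psne by (cases ps) auto
    have iP: "inner P = set ps" unfolding P_def qps inner_def by simp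
    have "contains_B_subdivision V A 2 1 1"
      using GL[OF AV S(4) ut(1) q(2) _ dP lP] False iP psS by auto
    then show ?thesis using nB by blast
  next
    case True
    define Q where "Q = u # ps"
    define L where "L = length Q"
    have dps: "dpath A ps t (last ps)"
    proof -
      have "length ps - 1 < length q" using qps by simp
      from dpath_take[OF q(1) this] have "dpath A (take (Suc (length ps - 1)) q) t (q ! (length ps - 1))" .
      moreover have "take (Suc (length ps - 1)) q = ps" using qps psne by (cases ps) auto
      moreover have "q ! (length ps - 1) = last ps" using qps psne by (simp add: nth_append last_conv_nth)
      ultimately show ?thesis by simp
    qed
    have dQ: "dpath A Q u (last ps)" unfolding Q_def using dpath_Cons[OF dps _ uq] ut(3) by simp
    have lastarc: "(last ps, u) \<in> A"
    proof -
      have "Suc (length ps - 1) < length q" using qps psne by simp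
      then have "(q!(length ps - 1), q!Suc (length ps - 1)) \<in> A" using q(1) unfolding dpath_def by blast
      moreover have "q ! (length ps - 1) = last ps" using qps psne by (simp add: nth_append last_conv_nth)
      moreover have "q ! Suc (length ps - 1) = u" using qps psne True by (simp add: nth_append)
      ultimately show ?thesis by simp
    qed
    have L2: "L \<ge> 2" unfolding L_def Q_def using psne by (cases ps) auto
    have cQ: "cyc A Q" using cyc_of_dpath[OF dQ lastarc] L2 unfolding L_def by simp
    have dstQ: "distinct Q" using cQ unfolding cyc_def by simp
    have Q0: "Q!0 = u" unfolding Q_def by simp
    have setQ: "set Q = insert u (set ps)" unfolding Q_def by simp
    have QV: "set Q \<subseteq> V" using cyc_in_V[OF cQ AV] .
    have ps_idx: "\<And>v. v \<in> set ps \<Longrightarrow> \<exists>k. 0 < k \<and> k < L \<and> Q!k = v"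
    proof -
      fix v assume "v \<in> set ps"
      then obtain k where "k < length ps" "ps!k = v" by (meson in_set_conv_nth)
      then show "\<exists>k. 0 < k \<and> k < L \<and> Q!k = v" unfolding L_def Q_def
        by (intro exI[of _ "Suc k"]) auto
    qed
    have idx_ps: "\<And>k. 0 < k \<Longrightarrow> k < L \<Longrightarrow> Q!k \<in> set ps"
      unfolding L_def Q_def by (metis Suc_less_eq gr0_implies_Suc length_Cons nth_Cons_Suc nth_mem)
    define S2 where "S2 = S \<union> set ps"
    define c2 where "c2 = (\<lambda>v. if v \<in> set ps then (c u + 1 + (LEAST i. Q!i = v) mod 2) mod 3 else c v)"
    have cu: "c u < 3" using S(5) ut(1) unfolding colT_def by blast
    have c2k: "\<And>k. 0 < k \<Longrightarrow> k < L \<Longrightarrow> c2 (Q!k) = (c u + 1 + k mod 2) mod 3"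
      unfolding c2_def using idx_ps least_idx[OF dstQ] unfolding L_def by simp
    have c2S: "\<And>v. v \<in> S \<Longrightarrow> c2 v = c v" unfolding c2_def using psS by auto
    have GLa: False if a: "a \<in> S" "a \<noteq> u" and k: "0 < k" "k < L" and ar: "(a, Q!k) \<in> A" for a k
    proof -
      have d1: "dpath A (drop k Q @ [Q!0]) (Q!k) (Q!0)" using cyc_seg2[OF cQ k(1)] k unfolding L_def by simp
      have sd: "set (drop k Q) \<subseteq> set ps" unfolding Q_def using k
        by (cases k) (auto dest: in_set_dropD)
      have "a \<notin> set (drop k Q @ [Q!0])" using sd a psS Q0 by auto
      then have dP: "dpath A (a # drop k Q @ [Q!0]) a u" using dpath_Cons[OF d1 ar] Q0 by simp
      have lP: "length (a # drop k Q @ [Q!0]) \<ge> 3" using k unfolding L_def by simp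
      have iP: "inner (a # drop k Q @ [Q!0]) \<inter> S = {}" unfolding inner_def using sd psS by auto
      show False using GL[OF AV S(4) a(1) ut(1) a(2) dP lP iP] nB by blast
    qed
    have GLb: False if b: "b \<in> S" "b \<noteq> u" and k: "0 < k" "k < L" and ar: "(Q!k, b) \<in> A" for b k
    proof -
      have d1: "dpath A (take (Suc k) Q) (Q!0) (Q!k)" using cyc_seg1[OF cQ] k unfolding L_def by simp
      have sd: "set (tl (take (Suc k) Q)) \<subseteq> set ps" unfolding Q_def by (auto dest: in_set_takeD)
      have "b \<notin> set (take (Suc k) Q)" using b psS setQ by (auto dest: in_set_takeD)
      then have dP: "dpath A (take (Suc k) Q @ [b]) u b" using dpath_snoc[OF d1 ar] Q0 by simp
      have lP: "length (take (Suc k) Q @ [b]) \<ge> 3" using k unfolding L_def by simp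
      have "inner (take (Suc k) Q @ [b]) = set (tl (take (Suc k) Q))" unfolding inner_def
        using k unfolding L_def by (cases "take (Suc k) Q") auto
      then have iP: "inner (take (Suc k) Q @ [b]) \<inter> S = {}" using sd psS by auto
      show False using GL[OF AV S(4) ut(1) b(1) b(2)[symmetric] dP lP iP] nB by blast
    qed
    have CEc: False if ij: "0 < i" "i < L" "0 < j" "j < L" "j \<noteq> Suc i" and ar: "(Q!i, Q!j) \<in> A" for i j
    proof -
      have ne: "Q!i \<noteq> Q!j" using ar loop by metis
      then have "i \<noteq> j" by auto
      have dR: "dpath A [Q!i, Q!j] (Q!i) (Q!j)" using ne ar unfolding dpath_def by (auto simp: less_Suc_eq)
      have inn: "inner [Q!i, Q!j] \<inter> set Q = {}" unfolding inner_def by simp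
      have nt: "length [Q!i, Q!j] = 2 \<longrightarrow> j \<noteq> Suc i mod length Q"
      proof (cases "Suc i < L")
        case True then show ?thesis using ij unfolding L_def by simp
      next
        case False then have "Suc i = L" using ij by simp
        then show ?thesis using ij unfolding L_def by simp
      qed
      show False using CE[OF AV cQ _ _ \<open>i \<noteq> j\<close> dR inn nt] ij nB unfolding L_def by blast
    qed
    have col: "colT A S2 c2"
      unfolding colT_def
    proof (intro conjI allI impI ballI)
      fix v assume "v \<in> S2"
      then show "c2 v < 3" using S(5) psS unfolding colT_def S2_def c2_def by auto
    next
      fix a b assume ar: "(a,b) \<in> A" and aS2: "a \<in> S2" and bS2: "b \<in> S2"
      show "c2 a \<noteq> c2 b"
      proof (cases "a \<in> S")
        case aS: True
        show ?thesis
        proof (cases "b \<in> S")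
          case True then show ?thesis using aS ar S(5) c2S unfolding colT_def by auto
        next
          case False
          then have "b \<in> set ps" using bS2 unfolding S2_def by simp
          then obtain k where k: "0 < k" "k < L" "Q!k = b" using ps_idx by blast
          show ?thesis
          proof (cases "a = u")
            case True
            have e1: "c2 b = (c u + 1 + k mod 2) mod 3" using c2k[OF k(1,2)] k(3) by simp
            have e2: "c2 a = c u" using c2S[OF aS] True by simp
            show ?thesis unfolding e1 e2 using col_arith1[OF cu, of k] by metis
          next
            case False then show ?thesis using GLa[OF aS False k(1,2)] ar k(3) by simp
          qed
        qed
      next
        case aN: False
        then have "a \<in> set ps" using aS2 unfolding S2_def by simp
        then obtain i where i: "0 < i" "i < L" "Q!i = a" using ps_idx by blast
        show ?thesis
        proof (cases "b \<in> S")
          case bS: True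
          show ?thesis
          proof (cases "b = u")
            case True
            have e1: "c2 a = (c u + 1 + i mod 2) mod 3" using c2k[OF i(1,2)] i(3) by simp
            have e2: "c2 b = c u" using c2S[OF bS] True by simp
            show ?thesis unfolding e1 e2 using col_arith1[OF cu, of i] by metis
          next
            case False then show ?thesis using GLb[OF bS False i(1,2)] ar i(3) by simp
          qed
        next
          case False
          then have "b \<in> set ps" using bS2 unfolding S2_def by simp
          then obtain j where j: "0 < j" "j < L" "Q!j = b" using ps_idx by blast
          show ?thesis
          proof (cases "j = Suc i")
            case True
            have e1: "c2 a = (c u + 1 + i mod 2) mod 3" using c2k[OF i(1,2)] i(3) by simp
            have e2: "c2 b = (c u + 1 + Suc i mod 2) mod 3" using c2k[OF j(1,2)] j(3) True by simp
            show ?thesis unfolding e1 e2 using col_arith2[OF cu, of i] by metis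
          next
            case False then show ?thesis using CEc[OF i(1,2) j(1,2) False] ar i(3) j(3) by simp
          qed
        qed
      qed
    qed
    have strong2: "strongT A S2"
    proof -
      let ?R2 = "A \<inter> S2 \<times> S2"
      let ?RQ = "A \<inter> set Q \<times> set Q"
      have m1: "A \<inter> S \<times> S \<subseteq> ?R2" unfolding S2_def by auto
      have m2: "?RQ \<subseteq> ?R2" unfolding S2_def setQ using ut(1) by auto
      have arcsQ: "\<forall>i. Suc i < length Q \<longrightarrow> (Q!i, Q!Suc i) \<in> ?RQ"
        using dQ unfolding dpath_def by auto
      have lastQ: "Q!(L - 1) = last ps" unfolding L_def Q_def using psne by (simp add: last_conv_nth)
      have lastR: "(Q!(L-1), Q!0) \<in> ?RQ" using lastarc lastQ Q0 setQ psne by auto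
      have toU: "(x, u) \<in> ?R2\<^sup>*" if x: "x \<in> S2" for x
      proof (cases "x \<in> S")
        case True
        then have "(x,u) \<in> (A \<inter> S \<times> S)\<^sup>*" using S(4) ut(1) unfolding strongT_def by blast
        then show ?thesis using rtrancl_mono[OF m1] by blast
      next
        case False
        then have "x \<in> set ps" using x unfolding S2_def by simp
        then obtain k where k: "0 < k" "k < L" "Q!k = x" using ps_idx by blast
        have "k \<le> L - 1" "L - 1 < length Q" using k unfolding L_def by auto
        then have "(Q!k, Q!(L-1)) \<in> ?RQ\<^sup>*" using path_reach[OF arcsQ] by blast
        then have "(Q!k, Q!0) \<in> ?RQ\<^sup>*" using lastR by (meson rtrancl.rtrancl_into_rtrancl)
        then show ?thesis using rtrancl_mono[OF m2] k(3) Q0 by blast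
      qed
      have fromU: "(u, y) \<in> ?R2\<^sup>*" if y: "y \<in> S2" for y
      proof (cases "y \<in> S")
        case True
        then have "(u,y) \<in> (A \<inter> S \<times> S)\<^sup>*" using S(4) ut(1) unfolding strongT_def by blast
        then show ?thesis using rtrancl_mono[OF m1] by blast
      next
        case False
        then have "y \<in> set ps" using y unfolding S2_def by simp
        then obtain k where k: "0 < k" "k < L" "Q!k = y" using ps_idx by blast
        have "0 \<le> k" "k < length Q" using k unfolding L_def by auto
        then have "(Q!0, Q!k) \<in> ?RQ\<^sup>*" using path_reach[OF arcsQ] by blast
        then show ?thesis using rtrancl_mono[OF m2] k(3) Q0 by blast
      qed
      show ?thesis unfolding strongT_def using toU fromU by (meson rtrancl_trans)
    qed
    have sub: "S \<subset> S2" unfolding S2_def using psne psS by (cases ps) auto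
    have S2V: "S2 \<subseteq> V" unfolding S2_def using S(1) QV setQ by auto
    show ?thesis using sub S2V strong2 col by blast
  qed
qed



theorem mainTheorem2:
  fixes V :: "'a set" and A :: "('a \<times> 'a) set"
  assumes "digraph V A"
    and "strongly_connected V A"
    and "chromatic_number V A \<ge> 4"
  shows "contains_B_subdivision V A 2 1 1"
proof (rule ccontr)
  assume nB: "\<not> contains_B_subdivision V A 2 1 1"
  have AV: "A \<subseteq> V \<times> V" and loop: "\<And>v. (v,v) \<notin> A" and fin: "finite V"
    using assms(1) unfolding digraph_def by auto
  have "\<exists>c. proper_colouring V A 3 c"
  proof (cases "V = {}")
    case True
    then have "A = {}" using AV by auto
    then show ?thesis using True unfolding proper_colouring_def by auto
  next
    case False
    then obtain v where v: "v \<in> V" by blast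
    define F where "F = {S. S \<subseteq> V \<and> S \<noteq> {} \<and> strongT A S \<and> (\<exists>c. colT A S c)}"
    have finF: "finite F" unfolding F_def using fin by (simp add: finite_subset[of _ "Pow V"])
    have vF: "{v} \<in> F" unfolding F_def strongT_def colT_def using v loop
      by (auto intro!: exI[of _ "\<lambda>_. 0"])
    have "card ` F \<noteq> {}" using vF by blast
    then have "Max (card ` F) \<in> card ` F" using finF by (intro Max_in) auto
    then obtain S where SF: "S \<in> F" and cS: "card S = Max (card ` F)" by force
    have maxS: "\<And>S'. S' \<in> F \<Longrightarrow> card S' \<le> card S" using finF cS by simp
    obtain c where c: "colT A S c" using SF unfolding F_def by blast
    have "S = V"
    proof (rule ccontr)
      assume "S \<noteq> V"
      then obtain S2 c2 where "S \<subset> S2" "S2 \<subseteq> V" "strongT A S2" "colT A S2 c2"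
        using extend[OF assms(1,2) nB, of S c] SF c unfolding F_def by blast
      moreover have "finite S2" using \<open>S2 \<subseteq> V\<close> fin finite_subset by blast
      ultimately have "S2 \<in> F" "card S < card S2" unfolding F_def
        using psubset_card_mono by auto
      then show False using maxS by fastforce
    qed
    then have "proper_colouring V A 3 c" using c AV unfolding colT_def proper_colouring_def by fast
    then show ?thesis by blast
  qed
  then obtain c where "proper_colouring V A 3 c" by blast
  then have "chromatic_number V A \<le> 3" unfolding chromatic_number_def by (intro Least_le) blast
  then show False using assms(3) by simp
qed

end
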